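(* Let $\varphi:[0,\infty)\to\mathbb{R}$ be a continuous function which is Lebesgue integrable on $(0,\infty)$, of bounded variation on $[0,\infty)$, and satisfies $\varphi(x)\to 0$ as $x\to\infty$. Define its Fourier–Stieltjes transform $$\Phi(t)=\int_0^\infty e^{ixt}\,d\varphi(x),\qquad t\in\mathbb{R}.$$ Then $\Phi(t)\to 0$ as $|t|\to\infty$ (i.e. $\varphi$ supports a Rajchman measure) if and only if $\Phi(t)$ has a finite limit as $|t|\to\infty$.
   Context: A function $\varphi$ of bounded variation is said to support a Rajchman measure if the Fourier–Stieltjes transform of the measure $d\varphi$ tends to zero at infinity. *)

theory Defs
  imports "HOL-Analysis.Analysis"
begin

definition has_bounded_variation_on :: "(real \<Rightarrow> real) \<Rightarrow> real set \<Rightarrow> bool" where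
  "has_bounded_variation_on f S \<longleftrightarrow>
     bdd_above {(\<Sum>i<n. \<bar>f (x (Suc i)) - f (x i)\<bar>) | x n.
                  (\<forall>i\<le>n. x i \<in> S) \<and> (\<forall>i<n. x i \<le> x (Suc i))}"

definition RS_sum :: "(real \<Rightarrow> complex) \<Rightarrow> (real \<Rightarrow> real) \<Rightarrow> (nat \<Rightarrow> real) \<Rightarrow> (nat \<Rightarrow> real) \<Rightarrow> nat \<Rightarrow> complex" where
  "RS_sum f g x \<xi> n = (\<Sum>i<n. f (\<xi> i) * complex_of_real (g (x (Suc i)) - g (x i)))"

definition has_RS_integral :: "(real \<Rightarrow> complex) \<Rightarrow> (real \<Rightarrow> real) \<Rightarrow> real \<Rightarrow> real \<Rightarrow> complex \<Rightarrow> bool" where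
  "has_RS_integral f g a b I \<longleftrightarrow>
     (\<forall>\<epsilon>>0. \<exists>\<delta>>0. \<forall>x \<xi> n. x 0 = a \<and> x n = b \<and>
        (\<forall>i<n. x i \<le> \<xi> i \<and> \<xi> i \<le> x (Suc i) \<and> x (Suc i) - x i < \<delta>) \<longrightarrow>
        norm (RS_sum f g x \<xi> n - I) < \<epsilon>)"

definition RS_integral :: "(real \<Rightarrow> complex) \<Rightarrow> (real \<Rightarrow> real) \<Rightarrow> real \<Rightarrow> real \<Rightarrow> complex" where
  "RS_integral f g a b = (THE I. has_RS_integral f g a b I)"

definition FS_transform :: "(real \<Rightarrow> real) \<Rightarrow> real \<Rightarrow> complex" where
  "FS_transform \<phi> t = Lim at_top (\<lambda>R. RS_integral (\<lambda>x. exp (\<i> * complex_of_real (x * t))) \<phi> 0 R)"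

end

theory Submission
  imports Defs "HOL-Probability.Sinc_Integral"
begin

lemma chain_mono:
  fixes x :: "nat \<Rightarrow> real"
  assumes "\<forall>i<n. x i \<le> x (Suc i)" "i \<le> j" "j \<le> n"
  shows "x i \<le> x j"
  using assms(2,3)
proof (induction j)
  case 0 then show ?case by simp
next
  case (Suc j)
  show ?case
  proof (cases "i = Suc j")
    case True then show ?thesis by simp
  next
    case False
    then have "x i \<le> x j" using Suc by simp
    also have "x j \<le> x (Suc j)" using assms(1) Suc.prems by simp
    finally show ?thesis .
  qed
qed

lemma sum_integrals_chain:
  fixes x :: "nat \<Rightarrow> real" and h :: "real \<Rightarrow> complex"
  assumes "\<forall>i<n. x i \<le> x (Suc i)" "continuous_on {x 0..x n} h"
  shows "(\<Sum>i<n. integral {x i..x (Suc i)} h) = integral {x 0..x n} h"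
  using assms
proof (induction n)
  case 0 then show ?case by simp
next
  case (Suc n)
  have m: "x 0 \<le> x n" "x n \<le> x (Suc n)"
    using chain_mono[OF Suc.prems(1), of 0 n] Suc.prems(1) by auto
  have "continuous_on {x 0..x n} h"
    by (rule continuous_on_subset[OF Suc.prems(2)]) (use m in auto)
  then have "(\<Sum>i<n. integral {x i..x (Suc i)} h) = integral {x 0..x n} h"
    using Suc.IH Suc.prems(1) by simp
  moreover have "integral {x 0..x n} h + integral {x n..x (Suc n)} h = integral {x 0..x (Suc n)} h"
    using Henstock_Kurzweil_Integration.integral_combine[OF m(1) m(2) integrable_continuous_real[OF Suc.prems(2)]] by simp
  ultimately show ?case by simp
qed

lemma RS_unique:
  assumes "a < b" "has_RS_integral f g a b I" "has_RS_integral f g a b J"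
  shows "I = J"
proof (rule ccontr)
  assume ne: "I \<noteq> J"
  define e where "e = norm (I - J) / 2"
  have e: "e > 0" using ne by (simp add: e_def)
  obtain d1 where d1: "d1 > 0" "\<forall>x \<xi> n. x 0 = a \<and> x n = b \<and>
        (\<forall>i<n. x i \<le> \<xi> i \<and> \<xi> i \<le> x (Suc i) \<and> x (Suc i) - x i < d1) \<longrightarrow>
        norm (RS_sum f g x \<xi> n - I) < e"
    using assms(2) e unfolding has_RS_integral_def by auto
  obtain d2 where d2: "d2 > 0" "\<forall>x \<xi> n. x 0 = a \<and> x n = b \<and>
        (\<forall>i<n. x i \<le> \<xi> i \<and> \<xi> i \<le> x (Suc i) \<and> x (Suc i) - x i < d2) \<longrightarrow>
        norm (RS_sum f g x \<xi> n - J) < e"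
    using assms(3) e unfolding has_RS_integral_def by auto
  define d where "d = min d1 d2"
  have d: "d > 0" using d1 d2 by (simp add: d_def)
  obtain n :: nat where n: "(b - a) / d < n" using reals_Archimedean2 by blast
  have npos: "n > 0"
  proof (rule ccontr)
    assume "\<not> n > 0" then have "n = 0" by simp
    with n have "(b - a) / d < 0" by simp
    moreover have "(b - a) / d > 0" using assms(1) d by simp
    ultimately show False by simp
  qed
  define c where "c = (b - a) / real n"
  define x where "x i = a + real i * c" for i
  have step: "x (Suc i) - x i = (b - a) / n" for i
    by (simp add: x_def algebra_simps c_def[symmetric])
  have small: "(b - a) / n < d"
    using n npos d by (simp add: divide_less_eq mult.commute)
  have pos: "(b - a) / n \<ge> 0" using assms(1) by simp
  have x0: "x 0 = a" by (simp add: x_def)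
  have xn: "x n = b" using npos by (simp add: x_def c_def)
  have mon: "x i \<le> x (Suc i)" for i using step[of i] pos by linarith
  have P1: "\<forall>i<n. x i \<le> x i \<and> x i \<le> x (Suc i) \<and> x (Suc i) - x i < d1"
    using step small mon by (simp add: d_def)
  have P2: "\<forall>i<n. x i \<le> x i \<and> x i \<le> x (Suc i) \<and> x (Suc i) - x i < d2"
    using step small mon by (simp add: d_def)
  have "norm (RS_sum f g x x n - I) < e"
    using d1(2) x0 xn P1 by blast
  moreover have "norm (RS_sum f g x x n - J) < e"
    using d2(2) x0 xn P2 by blast
  ultimately have "norm (I - J) < 2 * e"
    using norm_triangle_lt[of "I - RS_sum f g x x n" "RS_sum f g x x n - J" "2*e"]
    by (simp add: norm_minus_commute)
  then show False by (simp add: e_def)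
qed

lemma local_est:
  fixes \<phi> :: "real \<Rightarrow> real" and E D :: "real \<Rightarrow> complex"
  assumes u\<xi>: "u \<le> \<xi>" "\<xi> \<le> v"
    and E: "\<And>s. (E has_vector_derivative D s) (at s)"
    and Dc: "continuous_on UNIV D"
    and DB: "\<And>s. norm (D s) \<le> B"
    and \<phi>c: "continuous_on {u..v} \<phi>"
    and \<eta>: "\<And>s. s \<in> {u..v} \<Longrightarrow> \<bar>\<phi> s - \<phi> u\<bar> \<le> \<eta> \<and> \<bar>\<phi> s - \<phi> v\<bar> \<le> \<eta>"
  shows "norm (E v * of_real (\<phi> v) - E u * of_real (\<phi> u) - E \<xi> * of_real (\<phi> v - \<phi> u)
          - integral {u..v} (\<lambda>s. of_real (\<phi> s) * D s)) \<le> B * \<eta> * (v - u)"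
proof -
  define h where "h s = complex_of_real (\<phi> s) * D s" for s
  have B0: "B \<ge> 0" using DB[of 0] norm_ge_zero order_trans by blast
  have hc: "continuous_on {u..v} h" unfolding h_def
    by (intro continuous_intros continuous_on_subset[OF Dc] \<phi>c) auto
  have hc1: "continuous_on {\<xi>..v} h" by (rule continuous_on_subset[OF hc]) (use u\<xi> in auto)
  have hc2: "continuous_on {u..\<xi>} h" by (rule continuous_on_subset[OF hc]) (use u\<xi> in auto)
  have F1: "(D has_integral (E v - E \<xi>)) {\<xi>..v}"
    by (rule fundamental_theorem_of_calculus) (use u\<xi> in \<open>auto intro: has_vector_derivative_at_within[OF E]\<close>)
  have F2: "(D has_integral (E \<xi> - E u)) {u..\<xi>}"
    by (rule fundamental_theorem_of_calculus) (use u\<xi> in \<open>auto intro: has_vector_derivative_at_within[OF E]\<close>)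
  have I1: "(h has_integral integral {\<xi>..v} h) {\<xi>..v}"
    using integrable_continuous_real[OF hc1] by (simp add: has_integral_integral)
  have I2: "(h has_integral integral {u..\<xi>} h) {u..\<xi>}"
    using integrable_continuous_real[OF hc2] by (simp add: has_integral_integral)
  have Isum: "integral {u..\<xi>} h + integral {\<xi>..v} h = integral {u..v} h"
    using Henstock_Kurzweil_Integration.integral_combine[OF u\<xi> integrable_continuous_real[OF hc]] .
  have A1: "((\<lambda>s. of_real (\<phi> v) * D s - h s) has_integral
      (of_real (\<phi> v) * (E v - E \<xi>) - integral {\<xi>..v} h)) {\<xi>..v}"
    by (intro has_integral_diff has_integral_mult_right F1 I1)
  have A2: "((\<lambda>s. of_real (\<phi> u) * D s - h s) has_integral
      (of_real (\<phi> u) * (E \<xi> - E u) - integral {u..\<xi>} h)) {u..\<xi>}"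
    by (intro has_integral_diff has_integral_mult_right F2 I2)
  have N1: "norm (of_real (\<phi> v) * (E v - E \<xi>) - integral {\<xi>..v} h) \<le> (B * \<eta>) * measure lborel {\<xi>..v}"
  proof (rule has_integral_bound_real[OF _ _ A1, where S="{}"])
    show "0 \<le> B * \<eta>" using B0 \<eta>[of u] u\<xi> by auto
    fix s assume s: "s \<in> {\<xi>..v} - {}"
    have "norm (complex_of_real (\<phi> v) * D s - h s) = \<bar>\<phi> v - \<phi> s\<bar> * norm (D s)"
      unfolding h_def by (metis left_diff_distrib norm_mult norm_of_real of_real_diff)
    also have "\<dots> \<le> \<eta> * B"
      using \<eta>[of s] s u\<xi> DB[of s] by (intro mult_mono) auto
    finally show "norm (complex_of_real (\<phi> v) * D s - h s) \<le> B * \<eta>" by (simp add: mult.commute)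
  qed simp
  have N2: "norm (of_real (\<phi> u) * (E \<xi> - E u) - integral {u..\<xi>} h) \<le> (B * \<eta>) * measure lborel {u..\<xi>}"
  proof (rule has_integral_bound_real[OF _ _ A2, where S="{}"])
    show "0 \<le> B * \<eta>" using B0 \<eta>[of u] u\<xi> by auto
    fix s assume s: "s \<in> {u..\<xi>} - {}"
    have "norm (complex_of_real (\<phi> u) * D s - h s) = \<bar>\<phi> u - \<phi> s\<bar> * norm (D s)"
      unfolding h_def by (metis left_diff_distrib norm_mult norm_of_real of_real_diff)
    also have "\<dots> \<le> \<eta> * B"
      using \<eta>[of s] s u\<xi> DB[of s] by (intro mult_mono) (auto simp: abs_minus_commute)
    finally show "norm (complex_of_real (\<phi> u) * D s - h s) \<le> B * \<eta>" by (simp add: mult.commute)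
  qed simp
  have eq: "E v * of_real (\<phi> v) - E u * of_real (\<phi> u) - E \<xi> * of_real (\<phi> v - \<phi> u)
          - integral {u..v} h =
      (of_real (\<phi> v) * (E v - E \<xi>) - integral {\<xi>..v} h) +
      (of_real (\<phi> u) * (E \<xi> - E u) - integral {u..\<xi>} h)"
    using Isum[symmetric] by (simp add: algebra_simps)
  have "norm (E v * of_real (\<phi> v) - E u * of_real (\<phi> u) - E \<xi> * of_real (\<phi> v - \<phi> u)
          - integral {u..v} h) \<le> (B * \<eta>) * measure lborel {\<xi>..v} + (B * \<eta>) * measure lborel {u..\<xi>}"
    unfolding eq using N1 N2 norm_triangle_le add_mono by blast
  also have "\<dots> = B * \<eta> * (v - u)" using u\<xi> by (simp add: algebra_simps)
  finally show ?thesis unfolding h_def .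
qed

lemma E_deriv:
  "((\<lambda>x. exp (\<i> * complex_of_real (x * t))) has_vector_derivative
     (\<i> * complex_of_real t * exp (\<i> * complex_of_real (s * t)))) (at s)"
proof -
  have "((\<lambda>z. exp (\<i> * (z * complex_of_real t))) has_field_derivative
     (\<i> * complex_of_real t * exp (\<i> * (complex_of_real s * complex_of_real t)))) (at (complex_of_real s))"
    by (auto intro!: derivative_eq_intros simp: algebra_simps)
  from has_vector_derivative_real_field[OF this, of UNIV]
  show ?thesis by simp
qed

lemma RS_parts:
  fixes \<phi> :: "real \<Rightarrow> real" and t R :: real
  assumes R: "R > 0" and \<phi>c: "continuous_on {0..R} \<phi>"
  shows "has_RS_integral (\<lambda>x. exp (\<i> * complex_of_real (x * t))) \<phi> 0 R
     (exp (\<i> * complex_of_real (R * t)) * of_real (\<phi> R) - of_real (\<phi> 0)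
      - integral {0..R} (\<lambda>s. of_real (\<phi> s) * (\<i> * complex_of_real t * exp (\<i> * complex_of_real (s * t)))))"
  unfolding has_RS_integral_def
proof (intro allI impI)
  fix \<epsilon> :: real assume \<epsilon>: "\<epsilon> > 0"
  define E where "E x = exp (\<i> * complex_of_real (x * t))" for x
  define D where "D s = \<i> * complex_of_real t * E s" for s
  have Ed: "(E has_vector_derivative D s) (at s)" for s
    unfolding E_def D_def by (rule E_deriv)
  have Dc: "continuous_on UNIV D" unfolding D_def E_def by (intro continuous_intros)
  have DB: "norm (D s) \<le> \<bar>t\<bar>" for s
    unfolding D_def E_def by (simp add: norm_mult)
  define \<eta> where "\<eta> = \<epsilon> / (2 * (\<bar>t\<bar> * R + 1))"
  have \<eta>: "\<eta> > 0" unfolding \<eta>_def using \<epsilon> R by (intro divide_pos_pos) (auto intro: add_nonneg_pos)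
  have uc: "uniformly_continuous_on {0..R} \<phi>"
    by (rule compact_uniformly_continuous[OF \<phi>c]) simp
  obtain \<delta> where \<delta>: "\<delta> > 0" "\<And>a b. a \<in> {0..R} \<Longrightarrow> b \<in> {0..R} \<Longrightarrow> dist b a < \<delta> \<Longrightarrow> dist (\<phi> b) (\<phi> a) < \<eta>"
    using uc \<eta> unfolding uniformly_continuous_on_def by metis
  show "\<exists>\<delta>>0. \<forall>x \<xi> n. x 0 = 0 \<and> x n = R \<and>
        (\<forall>i<n. x i \<le> \<xi> i \<and> \<xi> i \<le> x (Suc i) \<and> x (Suc i) - x i < \<delta>) \<longrightarrow>
        norm (RS_sum (\<lambda>x. exp (\<i> * complex_of_real (x * t))) \<phi> x \<xi> n -
          (exp (\<i> * complex_of_real (R * t)) * of_real (\<phi> R) - of_real (\<phi> 0)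
      - integral {0..R} (\<lambda>s. of_real (\<phi> s) * (\<i> * complex_of_real t * exp (\<i> * complex_of_real (s * t)))))) < \<epsilon>"
  proof (intro exI[of _ \<delta>] conjI allI impI)
    show "\<delta> > 0" by (rule \<delta>(1))
    fix x \<xi> :: "nat \<Rightarrow> real" and n :: nat
    assume P: "x 0 = 0 \<and> x n = R \<and> (\<forall>i<n. x i \<le> \<xi> i \<and> \<xi> i \<le> x (Suc i) \<and> x (Suc i) - x i < \<delta>)"
    have mon: "\<forall>i<n. x i \<le> x (Suc i)" using P by force
    have inR: "x i \<in> {0..R}" if "i \<le> n" for i
      using chain_mono[OF mon, of 0 i] chain_mono[OF mon, of i n] that P by auto
    define T where "T i = E (x (Suc i)) * of_real (\<phi> (x (Suc i))) - E (x i) * of_real (\<phi> (x i))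
        - E (\<xi> i) * of_real (\<phi> (x (Suc i)) - \<phi> (x i)) - integral {x i..x (Suc i)} (\<lambda>s. of_real (\<phi> s) * D s)" for i
    have Tb: "norm (T i) \<le> \<bar>t\<bar> * \<eta> * (x (Suc i) - x i)" if i: "i < n" for i
      unfolding T_def
    proof (rule local_est[OF _ _ Ed Dc DB])
      show "x i \<le> \<xi> i" "\<xi> i \<le> x (Suc i)" using P i by auto
      show "continuous_on {x i..x (Suc i)} \<phi>"
        by (rule continuous_on_subset[OF \<phi>c]) (use inR[of i] inR[of "Suc i"] i in auto)
      fix s assume s: "s \<in> {x i..x (Suc i)}"
      have s0: "s \<in> {0..R}" using s inR[of i] inR[of "Suc i"] i by auto
      have len: "x (Suc i) - x i < \<delta>" using P i by auto
      have "dist s (x i) < \<delta>" "dist (x (Suc i)) s < \<delta>"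
        using s len by (auto simp: dist_real_def)
      then have "dist (\<phi> s) (\<phi> (x i)) < \<eta>" "dist (\<phi> (x (Suc i))) (\<phi> s) < \<eta>"
        using \<delta>(2) s0 inR[of i] inR[of "Suc i"] i by auto
      then show "\<bar>\<phi> s - \<phi> (x i)\<bar> \<le> \<eta> \<and> \<bar>\<phi> s - \<phi> (x (Suc i))\<bar> \<le> \<eta>"
        by (auto simp: dist_real_def abs_minus_commute)
    qed
    have tele1: "(\<Sum>i<n. E (x (Suc i)) * of_real (\<phi> (x (Suc i)))) - (\<Sum>i<n. E (x i) * of_real (\<phi> (x i)))
        = E R * of_real (\<phi> R) - of_real (\<phi> 0)"
      using sum_lessThan_telescope[of "\<lambda>i. E (x i) * of_real (\<phi> (x i))" n] P by (simp add: E_def sum_subtractf)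
    have tele2: "(\<Sum>i<n. x (Suc i) - x i) = R"
      using sum_lessThan_telescope[of x n] P by simp
    have ints: "(\<Sum>i<n. integral {x i..x (Suc i)} (\<lambda>s. of_real (\<phi> s) * D s))
        = integral {0..R} (\<lambda>s. of_real (\<phi> s) * D s)"
      using sum_integrals_chain[OF mon, of "\<lambda>s. of_real (\<phi> s) * D s"] P
      by (simp add: continuous_on_mult continuous_on_of_real \<phi>c continuous_on_subset[OF Dc])
    have "(\<Sum>i<n. T i) = (E R * of_real (\<phi> R) - of_real (\<phi> 0))
        - RS_sum E \<phi> x \<xi> n - integral {0..R} (\<lambda>s. of_real (\<phi> s) * D s)"
      unfolding T_def RS_sum_def sum_subtractf tele1 ints ..
    then have eq: "RS_sum E \<phi> x \<xi> n - (E R * of_real (\<phi> R) - of_real (\<phi> 0)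
        - integral {0..R} (\<lambda>s. of_real (\<phi> s) * D s)) = - (\<Sum>i<n. T i)"
      by (simp add: algebra_simps)
    have "norm (\<Sum>i<n. T i) \<le> (\<Sum>i<n. \<bar>t\<bar> * \<eta> * (x (Suc i) - x i))"
      by (rule order_trans[OF norm_sum sum_mono]) (use Tb in auto)
    also have "\<dots> = \<bar>t\<bar> * \<eta> * R" by (simp add: sum_distrib_left[symmetric] tele2)
    also have "\<dots> < \<epsilon>"
    proof -
      have "\<bar>t\<bar> * \<eta> * R = \<epsilon> * (\<bar>t\<bar> * R) / (2 * (\<bar>t\<bar> * R + 1))" by (simp add: \<eta>_def)
      also have "\<dots> < \<epsilon>"
      proof -
        have pos: "2 * (\<bar>t\<bar> * R + 1) > 0" using R by (simp add: add_nonneg_pos)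
        have "\<epsilon> * (\<bar>t\<bar> * R) < \<epsilon> * (2 * (\<bar>t\<bar> * R + 1))"
          by (rule mult_strict_left_mono) (use \<epsilon> R in \<open>auto intro: add_nonneg_pos\<close>)
        then show ?thesis using pos_divide_less_eq[OF pos] by (simp add: mult.commute)
      qed
      finally show ?thesis .
    qed
    finally have "norm (RS_sum E \<phi> x \<xi> n - (E R * of_real (\<phi> R) - of_real (\<phi> 0)
        - integral {0..R} (\<lambda>s. of_real (\<phi> s) * D s))) < \<epsilon>"
      unfolding eq by simp
    then show "norm (RS_sum (\<lambda>x. exp (\<i> * complex_of_real (x * t))) \<phi> x \<xi> n -
          (exp (\<i> * complex_of_real (R * t)) * of_real (\<phi> R) - of_real (\<phi> 0)
      - integral {0..R} (\<lambda>s. of_real (\<phi> s) * (\<i> * complex_of_real t * exp (\<i> * complex_of_real (s * t)))))) < \<epsilon>"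
      by (simp add: E_def[abs_def] D_def)
  qed
qed


lemma FS_formula:
  fixes \<phi> :: "real \<Rightarrow> real" and t :: real
  assumes \<phi>c: "continuous_on {0..} \<phi>" and int: "set_integrable lborel {0<..} \<phi>"
    and lim: "(\<phi> \<longlongrightarrow> 0) at_top"
  shows "FS_transform \<phi> t = - of_real (\<phi> 0) - \<i> * of_real t *
     (LINT s:{0<..}|lborel. of_real (\<phi> s) * exp (\<i> * complex_of_real (s * t)))"
proof -
  define g where "g s = complex_of_real (\<phi> s) * exp (\<i> * complex_of_real (s * t))" for s
  have gc: "continuous_on {0..} g" unfolding g_def
    by (intro continuous_intros \<phi>c)
  have gm: "(\<lambda>x. indicator {0<..} x *\<^sub>R g x) \<in> borel_measurable lborel"
  proof -
    have "continuous_on {0<..} g" by (rule continuous_on_subset[OF gc]) auto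
    then show ?thesis using borel_measurable_continuous_on_indicator[of "{0<..}" g] by simp
  qed
  have gi0: "set_integrable lborel {0<..} g"
    unfolding set_integrable_def
  proof (rule Bochner_Integration.integrable_bound[OF int[unfolded set_integrable_def] gm])
    show "AE x in lborel. norm (indicator {0<..} x *\<^sub>R g x) \<le> norm (indicator {0<..} x *\<^sub>R \<phi> x)"
      by (intro AE_I2) (auto simp: g_def norm_mult indicator_def)
  qed
  have gi: "set_integrable lborel {0..} g"
    using gi0 by (subst set_integrable_discrete_difference[where X="{0}"]) auto
  have geq: "(LINT s:{0..}|lborel. g s) = (LINT s:{0<..}|lborel. g s)"
    by (rule set_integral_discrete_difference[where X="{0}"]) auto
  have lim1: "((\<lambda>R. LINT s:{0..R}|lborel. g s) \<longlongrightarrow> (LINT s:{0<..}|lborel. g s)) at_top"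
    unfolding geq[symmetric] by (rule tendsto_set_lebesgue_integral_at_top[OF _ gi]) auto
  have eqR: "RS_integral (\<lambda>x. exp (\<i> * complex_of_real (x * t))) \<phi> 0 R =
       exp (\<i> * complex_of_real (R * t)) * of_real (\<phi> R) - of_real (\<phi> 0)
       - \<i> * of_real t * (LINT s:{0..R}|lborel. g s)" if R: "R > 0" for R
  proof -
    have \<phi>R: "continuous_on {0..R} \<phi>" by (rule continuous_on_subset[OF \<phi>c]) auto
    have gR: "continuous_on {0..R} g" by (rule continuous_on_subset[OF gc]) auto
    have "(g has_integral integral {0..R} g) {0..R}"
      using integrable_continuous_real[OF gR] by (simp add: has_integral_integral)
    from has_integral_mult_right[OF this, of "\<i> * of_real t"]
    have "integral {0..R} (\<lambda>s. of_real (\<phi> s) * (\<i> * complex_of_real t * exp (\<i> * complex_of_real (s * t))))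
        = \<i> * of_real t * integral {0..R} g"
      by (intro integral_unique) (simp add: g_def algebra_simps)
    also have "integral {0..R} g = (LINT s:{0..R}|lborel. g s)"
      by (rule set_borel_integral_eq_integral(2)[symmetric]) (rule borel_integrable_atLeastAtMost'[OF gR])
    finally have *: "integral {0..R} (\<lambda>s. of_real (\<phi> s) * (\<i> * complex_of_real t * exp (\<i> * complex_of_real (s * t))))
        = \<i> * of_real t * (LINT s:{0..R}|lborel. g s)" .
    have "has_RS_integral (\<lambda>x. exp (\<i> * complex_of_real (x * t))) \<phi> 0 R
       (exp (\<i> * complex_of_real (R * t)) * of_real (\<phi> R) - of_real (\<phi> 0)
       - \<i> * of_real t * (LINT s:{0..R}|lborel. g s))"
      using RS_parts[OF R \<phi>R, of t] unfolding * .
    then show ?thesis unfolding RS_integral_def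
      using RS_unique[OF R] by blast
  qed
  have lim2: "((\<lambda>R. exp (\<i> * complex_of_real (R * t)) * of_real (\<phi> R)) \<longlongrightarrow> 0) at_top"
  proof (rule Lim_null_comparison)
    show "\<forall>\<^sub>F x in at_top. norm (exp (\<i> * complex_of_real (x * t)) * complex_of_real (\<phi> x)) \<le> \<bar>\<phi> x\<bar>"
      by (intro always_eventually allI) (simp add: norm_mult)
    show "((\<lambda>x. \<bar>\<phi> x\<bar>) \<longlongrightarrow> 0) at_top" using tendsto_rabs[OF lim] by simp
  qed
  have lim3: "((\<lambda>R. RS_integral (\<lambda>x. exp (\<i> * complex_of_real (x * t))) \<phi> 0 R) \<longlongrightarrow>
      0 - of_real (\<phi> 0) - \<i> * of_real t * (LINT s:{0<..}|lborel. g s)) at_top"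
  proof (rule Lim_transform_eventually)
    show "\<forall>\<^sub>F R in at_top. exp (\<i> * complex_of_real (R * t)) * of_real (\<phi> R) - of_real (\<phi> 0)
       - \<i> * of_real t * (LINT s:{0..R}|lborel. g s) = RS_integral (\<lambda>x. exp (\<i> * complex_of_real (x * t))) \<phi> 0 R"
      using eventually_gt_at_top[of 0] by eventually_elim (rule eqR[symmetric])
    show "((\<lambda>R. exp (\<i> * complex_of_real (R * t)) * of_real (\<phi> R) - of_real (\<phi> 0)
       - \<i> * of_real t * (LINT s:{0..R}|lborel. g s)) \<longlongrightarrow>
       0 - of_real (\<phi> 0) - \<i> * of_real t * (LINT s:{0<..}|lborel. g s)) at_top"
      by (intro tendsto_intros lim2 lim1)
  qed
  show ?thesis unfolding FS_transform_def
    using tendsto_Lim[OF trivial_limit_at_top_linorder lim3] by (simp add: g_def)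
qed


lemma sbm_cont:
  fixes g :: "real \<Rightarrow> 'a::real_normed_vector"
  assumes "A \<in> sets borel" "continuous_on UNIV g"
  shows "set_borel_measurable lborel A g"
  unfolding set_borel_measurable_def
  using borel_measurable_continuous_on_indicator[OF assms(1) continuous_on_subset[OF assms(2)]] by simp

lemma exp_neg_int:
  shows "set_integrable lborel {0<..} (\<lambda>s::real. exp (-s))"
    and "(LINT s:{0<..}|lborel. exp (-s::real)) = 1"
proof -
  have d: "((\<lambda>s. - exp (-s)) has_real_derivative exp (-x)) (at x)" for x :: real
    by (auto intro!: derivative_eq_intros)
  have l1: "(((\<lambda>s. - exp (-s)) \<circ> real_of_ereal) \<longlongrightarrow> -1) (at_right 0)"
    unfolding zero_ereal_def ereal_tendsto_simps
    by (rule tendsto_eq_intros refl | simp)+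
  have l2: "(((\<lambda>s::real. - exp (-s)) \<circ> real_of_ereal) \<longlongrightarrow> 0) (at_left \<infinity>)"
    unfolding ereal_tendsto_simps by real_asymp
  note * = interval_integral_FTC_nonneg[where F="\<lambda>s. - exp (-s)" and f="\<lambda>s. exp (-s)" and a=0 and b=\<infinity>
     and A="-1" and B=0, OF _ d _ _ l1 l2]
  from * show "set_integrable lborel {0<..} (\<lambda>s::real. exp (-s))"
    by (simp add: zero_ereal_def)
  from * show "(LINT s:{0<..}|lborel. exp (-s::real)) = 1"
    using interval_lebesgue_integral_0_infty(2)[of lborel "\<lambda>s. exp (-s)"] by simp
qed

lemma sexp_int:
  shows "set_integrable lborel {0<..} (\<lambda>s::real. s * exp (-s))"
proof -
  have *: "set_integrable lborel (einterval 0 \<infinity>) (\<lambda>s::real. s * exp (-s))"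
  proof (rule interval_integral_FTC_nonneg[where F="\<lambda>s. - (s + 1) * exp (-s)"])
    show "((\<lambda>s. - (s + 1) * exp (-s)) has_real_derivative x * exp (-x)) (at x)" for x
      by (auto intro!: derivative_eq_intros simp: algebra_simps)
    show "(((\<lambda>s. - (s + 1) * exp (-s)) \<circ> real_of_ereal) \<longlongrightarrow> -1) (at_right 0)"
      unfolding zero_ereal_def ereal_tendsto_simps
      by (rule tendsto_eq_intros refl | simp)+
    show "(((\<lambda>s. - (s + 1) * exp (-s)) \<circ> real_of_ereal) \<longlongrightarrow> 0) (at_left \<infinity>)"
      unfolding ereal_tendsto_simps by real_asymp
    show "AE x in lborel. 0 < ereal x \<longrightarrow> ereal x < \<infinity> \<longrightarrow> 0 \<le> x * exp (- x)"
      by (intro AE_I2) auto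
  qed auto
  then show ?thesis by (simp add: zero_ereal_def)
qed

lemma kernel_int:
  fixes y :: real
  shows "set_integrable lborel {0<..} (\<lambda>s::real. complex_of_real (s * exp (-s)) * exp (\<i> * complex_of_real (y * s)))"
    and "(LINT s:{0<..}|lborel. complex_of_real (s * exp (-s)) * exp (\<i> * complex_of_real (y * s)))
          = 1 / (1 - \<i> * of_real y)^2"
proof -
  define a where "a = \<i> * of_real y - 1"
  have a0: "a \<noteq> 0" by (simp add: a_def complex_eq_iff)
  have a1: "cmod a \<ge> 1"
    using abs_Re_le_cmod[of a] by (simp add: a_def)
  define f where "f s = complex_of_real (s * exp (-s)) * exp (\<i> * complex_of_real (y * s))" for s
  have feq: "f s = of_real s * exp (a * of_real s)" for s
  proof -
    have "exp (a * of_real s) = exp (of_real (-s)) * exp (\<i> * complex_of_real (y * s))"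
      by (simp add: a_def exp_add[symmetric] algebra_simps)
    moreover have "complex_of_real (exp (-s)) = exp (of_real (-s))" by (simp only: exp_of_real)
    ultimately show ?thesis by (simp add: f_def)
  qed
  have fc: "continuous_on UNIV f" unfolding f_def by (intro continuous_intros)
  have fi: "set_integrable lborel {0<..} f"
  proof (rule set_integrable_bound[OF sexp_int sbm_cont[OF _ fc]])
    show "AE x in lborel. x \<in> {0<..} \<longrightarrow> norm (f x) \<le> norm (x * exp (- x))"
      by (intro AE_I2) (simp add: f_def norm_mult)
  qed simp
  then show "set_integrable lborel {0<..} (\<lambda>s::real. complex_of_real (s * exp (-s)) * exp (\<i> * complex_of_real (y * s)))"
    unfolding f_def[abs_def] .
  define P where "P z = exp (a * z) * (z / a - 1 / a^2)" for z
  have Pd: "(P has_field_derivative z * exp (a * z)) (at z)" for z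
  proof -
    have "(P has_field_derivative exp (a * z) * a * (z / a - 1 / a^2) + exp (a * z) * (1 / a)) (at z)"
      unfolding P_def using a0 by (auto intro!: derivative_eq_intros)
    also have "exp (a * z) * a * (z / a - 1 / a^2) + exp (a * z) * (1 / a) = z * exp (a * z)"
      using a0 by (simp add: field_simps power2_eq_square)
    finally show ?thesis .
  qed
  have "(LBINT s=0..\<infinity>. f s) = 0 - P 0"
  proof (rule interval_integral_FTC_integrable[where F="\<lambda>s. P (of_real s)"])
    show "((\<lambda>s. P (of_real s)) has_vector_derivative f x) (at x)" for x
      unfolding feq using has_vector_derivative_real_field[OF Pd[of "of_real x"], of UNIV] by simp
    show "isCont f x" for x using fc by (simp add: continuous_on_eq_continuous_at)
    show "set_integrable lborel (einterval 0 \<infinity>) f" using fi by (simp add: zero_ereal_def)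
    show "(((\<lambda>s. P (of_real s)) \<circ> real_of_ereal) \<longlongrightarrow> P 0) (at_right 0)"
      unfolding zero_ereal_def ereal_tendsto_simps
    proof -
      have "isCont (\<lambda>s. P (of_real s)) 0" unfolding P_def using a0 by (intro continuous_intros)
      then have "continuous (at_right 0) (\<lambda>s. P (of_real s))"
        by (rule continuous_at_imp_continuous_at_within)
      then show "((\<lambda>s. P (of_real s)) \<longlongrightarrow> P 0) (at_right 0)" by (simp add: continuous_within)
    qed
    show "(((\<lambda>s. P (of_real s)) \<circ> real_of_ereal) \<longlongrightarrow> 0) (at_left \<infinity>)"
      unfolding ereal_tendsto_simps
    proof (rule Lim_null_comparison)
      show "((\<lambda>s::real. exp (-s) * (s + 1)) \<longlongrightarrow> 0) at_top" by real_asymp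
      have pb: "norm (P (of_real s)) \<le> exp (-s) * (s + 1)" if s: "s \<ge> 0" for s
      proof -
        have ea: "norm (exp (a * of_real s)) = exp (-s)" by (simp add: a_def)
        have "norm (of_real s / a - 1 / a^2) \<le> norm (of_real s / a) + norm (1 / a^2)"
          by (rule norm_triangle_ineq4)
        also have "norm (of_real s / a) \<le> s"
          using s a1 by (simp add: norm_divide divide_le_eq mult_le_cancel_left1)
        also have "norm (1 / a^2) \<le> 1"
          using a1 by (simp add: norm_divide norm_power divide_le_eq one_le_power)
        finally have "norm (of_real s / a - 1 / a^2) \<le> s + 1" by simp
        then show ?thesis unfolding P_def norm_mult ea
          by (intro mult_left_mono) auto
      qed
      show "\<forall>\<^sub>F x::real in at_top. norm (P (of_real x)) \<le> exp (- x) * (x + 1)"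
        using eventually_ge_at_top[of "0::real"] by eventually_elim (rule pb)
    qed
  qed simp
  also have "0 - P 0 = 1 / (1 - \<i> * of_real y)^2"
  proof -
    have "a^2 = (1 - \<i> * of_real y)^2" by (simp add: a_def power2_eq_square algebra_simps)
    then show ?thesis by (simp add: P_def)
  qed
  finally show "(LINT s:{0<..}|lborel. complex_of_real (s * exp (-s)) * exp (\<i> * complex_of_real (y * s)))
          = 1 / (1 - \<i> * of_real y)^2"
    using interval_lebesgue_integral_0_infty(2)[of lborel f] by (simp add: f_def[abs_def])
qed

lemma norm_k: "norm (1 / (1 - \<i> * complex_of_real y)^2) = inverse (1 + y^2)"
proof -
  have "1 - \<i> * complex_of_real y = Complex 1 (-y)" by (simp add: complex_eq_iff)
  then have "norm (1 - \<i> * complex_of_real y) ^ 2 = 1 + y^2"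
    by (simp add: cmod_def)
  then show ?thesis by (simp add: norm_divide norm_power divide_inverse norm_inverse)
qed

lemma k_int:
  shows "set_integrable lborel {0<..} (\<lambda>y::real. 1 / (1 - \<i> * complex_of_real y)^2)"
    and "(LINT y:{0<..}|lborel. 1 / (1 - \<i> * complex_of_real y)^2) = \<i>"
proof -
  define k where "k y = 1 / (1 - \<i> * complex_of_real y)^2" for y
  have nz: "1 - \<i> * z \<noteq> 0" if "z \<in> \<real>" for z
    using that by (auto simp: complex_eq_iff elim!: Reals_cases)
  have kc: "continuous_on UNIV k" unfolding k_def
    by (intro continuous_intros) (auto simp: nz)
  have ii: "set_integrable lborel {0<..} (\<lambda>x::real. inverse (1 + x^2))"
    using set_integrable_subset[OF integrable_inverse_1_plus_square] by simp
  have ki: "set_integrable lborel {0<..} k"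
  proof (rule set_integrable_bound[OF ii sbm_cont[OF _ kc]])
    show "AE x in lborel. x \<in> {0<..} \<longrightarrow> norm (k x) \<le> norm (inverse (1 + x^2))"
      by (intro AE_I2) (simp add: k_def norm_k)
  qed simp
  then show "set_integrable lborel {0<..} (\<lambda>y::real. 1 / (1 - \<i> * complex_of_real y)^2)"
    unfolding k_def[abs_def] .
  define Q where "Q z = - \<i> / (1 - \<i> * z)" for z
  have Qd: "(Q has_field_derivative 1 / (1 - \<i> * z)^2) (at z)" if "z \<in> \<real>" for z
  proof -
    have "(Q has_field_derivative - (- \<i> * - \<i>) / (1 - \<i> * z)^2) (at z)"
      unfolding Q_def using nz[OF that]
      by (auto intro!: derivative_eq_intros simp: power2_eq_square divide_simps)
    then show ?thesis by simp
  qed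
  have "(LBINT s=0..\<infinity>. k s) = 0 - Q 0"
  proof (rule interval_integral_FTC_integrable[where F="\<lambda>s. Q (of_real s)"])
    show "((\<lambda>s. Q (of_real s)) has_vector_derivative k x) (at x)" for x
      unfolding k_def using has_vector_derivative_real_field[OF Qd[of "of_real x"], of UNIV] by simp
    show "isCont k x" for x using kc by (simp add: continuous_on_eq_continuous_at)
    show "set_integrable lborel (einterval 0 \<infinity>) k" using ki by (simp add: zero_ereal_def)
    show "(((\<lambda>s. Q (of_real s)) \<circ> real_of_ereal) \<longlongrightarrow> Q 0) (at_right 0)"
      unfolding zero_ereal_def ereal_tendsto_simps Q_def
      by (rule tendsto_eq_intros refl | simp)+
    show "(((\<lambda>s. Q (of_real s)) \<circ> real_of_ereal) \<longlongrightarrow> 0) (at_left \<infinity>)"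
      unfolding ereal_tendsto_simps
    proof (rule Lim_null_comparison)
      show "((\<lambda>s::real. 1 / s) \<longlongrightarrow> 0) at_top" by real_asymp
      have pb: "norm (Q (of_real s)) \<le> 1 / s" if s: "s > 0" for s
      proof -
        have "s \<le> norm (1 - \<i> * complex_of_real s)"
          using abs_Im_le_cmod[of "1 - \<i> * complex_of_real s"] s by simp
        then show ?thesis using s
          by (simp add: Q_def norm_divide divide_le_eq field_simps)
      qed
      show "\<forall>\<^sub>F x::real in at_top. norm (Q (of_real x)) \<le> 1 / x"
        using eventually_gt_at_top[of "0::real"] by eventually_elim (rule pb)
    qed
  qed simp
  then show "(LINT y:{0<..}|lborel. 1 / (1 - \<i> * complex_of_real y)^2) = \<i>"
    using interval_lebesgue_integral_0_infty(2)[of lborel k] by (simp add: k_def[abs_def] Q_def)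
qed


definition FF :: "(real \<Rightarrow> real) \<Rightarrow> real \<Rightarrow> complex" where
  "FF \<psi> t = (LINT x:{0<..}|lborel. complex_of_real (\<psi> x) * exp (\<i> * complex_of_real (x * t)))"

lemma FF_meas:
  assumes [measurable]: "\<psi> \<in> borel_measurable borel"
  shows "FF \<psi> \<in> borel_measurable borel"
proof -
  have "(\<lambda>t. \<integral>x. indicator {0<..} x *\<^sub>R (complex_of_real (\<psi> x) * exp (\<i> * complex_of_real (x * t))) \<partial>lborel)
      \<in> borel_measurable borel"
    by (rule lborel.borel_measurable_lebesgue_integral) measurable
  then show ?thesis unfolding FF_def[abs_def] set_lebesgue_integral_def .
qed

lemma FF_bound:
  assumes "set_integrable lborel {0<..} \<psi>"
  shows "norm (FF \<psi> t) \<le> (LINT x:{0<..}|lborel. \<bar>\<psi> x\<bar>)"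
proof -
  have m: "set_borel_measurable lborel {0<..} (\<lambda>x. complex_of_real (\<psi> x) * exp (\<i> * complex_of_real (x * t)))"
  proof -
    have "(\<lambda>x. indicator {0<..} x *\<^sub>R \<psi> x) \<in> borel_measurable lborel"
      using assms unfolding set_integrable_def by (rule borel_measurable_integrable)
    then have "(\<lambda>x. complex_of_real (indicator {0<..} x *\<^sub>R \<psi> x) * exp (\<i> * complex_of_real (x * t))) \<in> borel_measurable lborel"
      by measurable
    then show ?thesis unfolding set_borel_measurable_def
      by (rule measurable_cong[THEN iffD1, rotated]) (auto simp: indicator_def)
  qed
  have i: "set_integrable lborel {0<..} (\<lambda>x. complex_of_real (\<psi> x) * exp (\<i> * complex_of_real (x * t)))"
    by (rule set_integrable_bound[OF assms m]) (auto simp: norm_mult)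
  have "norm (FF \<psi> t) \<le> (LINT x:{0<..}|lborel. norm (complex_of_real (\<psi> x) * exp (\<i> * complex_of_real (x * t))))"
    unfolding FF_def by (rule set_integral_norm_bound[OF i])
  also have "\<dots> = (LINT x:{0<..}|lborel. \<bar>\<psi> x\<bar>)"
    by (simp add: norm_mult)
  finally show ?thesis .
qed

lemma tside:
  fixes \<psi> :: "real \<Rightarrow> real" and c :: complex
  assumes \<psi>m [measurable]: "\<psi> \<in> borel_measurable borel" and int: "set_integrable lborel {0<..} \<psi>"
    and H: "((\<lambda>t. of_real t * FF \<psi> t) \<longlongrightarrow> c) at_top"
  shows "(\<lambda>n. LINT s:{0<..}|lborel. exp (-s) *\<^sub>R (of_real (s * real (Suc n)) * FF \<psi> (s * real (Suc n)))) \<longlonglongrightarrow> c"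
proof -
  define N where "N = (LINT x:{0<..}|lborel. \<bar>\<psi> x\<bar>)"
  define G where "G t = of_real t * FF \<psi> t" for t
  have Gm [measurable]: "G \<in> borel_measurable borel"
    unfolding G_def[abs_def] using FF_meas[OF \<psi>m] by measurable
  obtain T0 where T0: "\<And>t. t \<ge> T0 \<Longrightarrow> dist (G t) c < 1"
    using H[unfolded tendsto_iff, rule_format, of 1] unfolding G_def eventually_at_top_linorder by auto
  define K where "K = max (norm c + 1) (max T0 0 * N)"
  have GK: "norm (G t) \<le> K" if t: "t \<ge> 0" for t
  proof (cases "t \<ge> T0")
    case True
    then have "norm (G t) \<le> norm c + 1" using T0[of t] norm_triangle_ineq2[of "G t" c]
      by (simp add: dist_norm)
    then show ?thesis unfolding K_def by linarith
  next
    case False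
    have "norm (G t) = t * norm (FF \<psi> t)" using t by (simp add: G_def norm_mult)
    also have "\<dots> \<le> max T0 0 * N"
      using False t FF_bound[OF int, of t] unfolding N_def
      by (intro mult_mono) (auto intro: order_trans[OF norm_ge_zero])
    finally show ?thesis unfolding K_def by linarith
  qed
  have "(\<lambda>n. \<integral>s. indicator {0<..} s *\<^sub>R (exp (-s) *\<^sub>R G (s * real (Suc n))) \<partial>lborel)
      \<longlonglongrightarrow> (\<integral>s. indicator {0<..} s *\<^sub>R (exp (-s) *\<^sub>R c) \<partial>lborel)"
  proof (rule integral_dominated_convergence[where w="\<lambda>s. indicator {0<..} s * exp (-s) * K"])
    show "(\<lambda>s. indicator {0<..} s *\<^sub>R (exp (-s) *\<^sub>R c)) \<in> borel_measurable lborel" by measurable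
    show "(\<lambda>s. indicator {0<..} s *\<^sub>R (exp (-s) *\<^sub>R G (s * real (Suc n)))) \<in> borel_measurable lborel" for n
      by measurable
    show "integrable lborel (\<lambda>s. indicator {0<..} s * exp (-s) * K)"
      using exp_neg_int(1) unfolding set_integrable_def by (intro integrable_mult_left) simp
    show "AE s in lborel. (\<lambda>n. indicator {0<..} s *\<^sub>R (exp (-s) *\<^sub>R G (s * real (Suc n))))
       \<longlonglongrightarrow> indicator {0<..} s *\<^sub>R (exp (-s) *\<^sub>R c)"
    proof (intro AE_I2)
      fix s :: real
      show "(\<lambda>n. indicator {0<..} s *\<^sub>R (exp (-s) *\<^sub>R G (s * real (Suc n))))
       \<longlonglongrightarrow> indicator {0<..} s *\<^sub>R (exp (-s) *\<^sub>R c)"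
      proof (cases "s > 0")
        case True
        have "filterlim (\<lambda>n. s * real (Suc n)) at_top sequentially"
          using True by (intro filterlim_tendsto_pos_mult_at_top[OF tendsto_const True])
             (simp add: filterlim_Suc filterlim_compose[OF filterlim_real_sequentially] del: of_nat_Suc)
        then have "(\<lambda>n. G (s * real (Suc n))) \<longlonglongrightarrow> c"
          using H unfolding G_def[abs_def] by (rule filterlim_compose[rotated])
        then show ?thesis by (intro tendsto_intros)
      qed simp
    qed
    show "AE s in lborel. norm (indicator {0<..} s *\<^sub>R (exp (-s) *\<^sub>R G (s * real (Suc n)))) \<le> indicator {0<..} s * exp (-s) * K" for n
    proof (intro AE_I2)
      fix s :: real
      show "norm (indicator {0<..} s *\<^sub>R (exp (-s) *\<^sub>R G (s * real (Suc n)))) \<le> indicator {0<..} s * exp (-s) * K"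
        using GK[of "s * real (Suc n)"] by (auto simp: indicator_def)
    qed
  qed
  also have "(\<integral>s. indicator {0<..} s *\<^sub>R (exp (-s) *\<^sub>R c) \<partial>lborel) = (LINT s:{0<..}|lborel. exp (-s)) *\<^sub>R c"
    unfolding set_lebesgue_integral_def using exp_neg_int(1) unfolding set_integrable_def
    by (subst integral_scaleR_left[symmetric]) (auto intro!: Bochner_Integration.integral_cong)
  also have "\<dots> = c" using exp_neg_int(2) by simp
  finally show ?thesis unfolding set_lebesgue_integral_def G_def .
qed

lemma aff_int:
  fixes \<psi> :: "real \<Rightarrow> real" and m :: real
  assumes int: "set_integrable lborel {0<..} \<psi>" and m: "m > 0"
  shows "integrable lborel (\<lambda>y. indicator {0<..} y *\<^sub>R \<psi> (y / m))"
proof -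
  have i1: "integrable lborel (\<lambda>y. indicator {0<..} (0 + 1/m * y) *\<^sub>R \<psi> (0 + 1/m * y))"
    by (rule lborel_integrable_real_affine[OF int[unfolded set_integrable_def]]) (use m in simp)
  have eq: "(\<lambda>y. indicator {0<..} (0 + 1/m * y) *\<^sub>R \<psi> (0 + 1/m * y)) = (\<lambda>y. indicator {0<..} y *\<^sub>R \<psi> (y / m))"
    using m by (auto simp: fun_eq_iff indicator_def zero_less_mult_iff zero_less_divide_iff)
  show ?thesis using i1 unfolding eq .
qed

lemma FF_scale:
  fixes \<psi> :: "real \<Rightarrow> real" and m s :: real
  assumes m: "m > 0"
  shows "FF \<psi> (s * m) = (1/m) *\<^sub>R (LINT y:{0<..}|lborel. complex_of_real (\<psi> (y / m)) * exp (\<i> * complex_of_real (y * s)))"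
proof -
  define g where "g x = indicator {0<..} x *\<^sub>R (complex_of_real (\<psi> x) * exp (\<i> * complex_of_real (x * (s * m))))" for x
  have "FF \<psi> (s * m) = (\<integral>x. g x \<partial>lborel)"
    unfolding FF_def set_lebesgue_integral_def g_def ..
  also have "\<dots> = \<bar>1/m\<bar> *\<^sub>R (\<integral>y. g (0 + 1/m * y) \<partial>lborel)"
    using m by (intro lborel_integral_real_affine) simp
  also have "(\<lambda>y. g (0 + 1/m * y)) = (\<lambda>y. indicator {0<..} y *\<^sub>R (complex_of_real (\<psi> (y / m)) * exp (\<i> * complex_of_real (y * s))))"
    using m by (auto simp: g_def indicator_def zero_less_mult_iff zero_less_divide_iff fun_eq_iff)
  finally show ?thesis using m unfolding set_lebesgue_integral_def by simp
qed

lemma yside_eq: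
  fixes \<psi> :: "real \<Rightarrow> real" and m :: real
  assumes \<psi>m [measurable]: "\<psi> \<in> borel_measurable borel" and int: "set_integrable lborel {0<..} \<psi>"
    and m: "m > 0"
  shows "(LINT s:{0<..}|lborel. exp (-s) *\<^sub>R (of_real (s * m) * FF \<psi> (s * m)))
       = (LINT y:{0<..}|lborel. complex_of_real (\<psi> (y / m)) * (1 / (1 - \<i> * of_real y)^2))"
proof -
  define G where "G s = (LINT y:{0<..}|lborel. complex_of_real (\<psi> (y / m)) * exp (\<i> * complex_of_real (y * s)))" for s
  define h where "h s y = complex_of_real (indicator {0<..} s * s * exp (-s)) *
      (indicator {0<..} y *\<^sub>R (complex_of_real (\<psi> (y / m)) * exp (\<i> * complex_of_real (y * s))))" for s y :: real
  have hm [measurable]: "(\<lambda>p. h (fst p) (snd p)) \<in> borel_measurable (lborel \<Otimes>\<^sub>M lborel)"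
    unfolding h_def by measurable
  have A: "integrable lborel (\<lambda>y. indicator {0<..} y *\<^sub>R \<psi> (y / m))" by (rule aff_int[OF int m])
  define C where "C = (\<integral>y. indicator {0<..} y * \<bar>\<psi> (y / m)\<bar> \<partial>lborel)"
  have eq1: "exp (-s) *\<^sub>R (of_real (s * m) * FF \<psi> (s * m)) = complex_of_real (s * exp (-s)) * G s" for s
    using m by (simp add: FF_scale G_def scaleR_conv_of_real)
  have inner1: "(\<integral>y. h s y \<partial>lborel) = indicator {0<..} s *\<^sub>R (complex_of_real (s * exp (-s)) * G s)" for s
  proof -
    have "(\<integral>y. h s y \<partial>lborel) = complex_of_real (indicator {0<..} s * s * exp (-s)) * G s"
      unfolding h_def G_def set_lebesgue_integral_def by (rule integral_mult_right_zero)
    then show ?thesis by (simp add: indicator_def)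
  qed
  have "(LINT s:{0<..}|lborel. exp (-s) *\<^sub>R (of_real (s * m) * FF \<psi> (s * m)))
      = (\<integral>s. (\<integral>y. h s y \<partial>lborel) \<partial>lborel)"
    unfolding set_lebesgue_integral_def inner1 eq1 ..
  also have "\<dots> = (\<integral>y. (\<integral>s. h s y \<partial>lborel) \<partial>lborel)"
  proof (rule lborel_pair.Fubini_integral[symmetric])
    show "integrable (lborel \<Otimes>\<^sub>M lborel) (\<lambda>(s, y). h s y)"
    proof (rule lborel_pair.Fubini_integrable)
      show "(\<lambda>(s, y). h s y) \<in> borel_measurable (lborel \<Otimes>\<^sub>M lborel)"
        using hm by (simp add: case_prod_beta')
      have n: "(\<integral>y. norm ((\<lambda>(s, y). h s y) (s, y)) \<partial>lborel) = (indicator {0<..} s *\<^sub>R (s * exp (-s))) * C" for s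
      proof -
        have "(\<integral>y. norm ((\<lambda>(s, y). h s y) (s, y)) \<partial>lborel) =
            (\<integral>y. (indicator {0<..} s * (s * exp (-s))) * (indicator {0<..} y * \<bar>\<psi> (y / m)\<bar>) \<partial>lborel)"
          by (rule Bochner_Integration.integral_cong) (auto simp: h_def norm_mult indicator_def abs_mult)
        also have "\<dots> = (indicator {0<..} s * (s * exp (-s))) * C"
          unfolding C_def by (rule integral_mult_right_zero)
        finally show ?thesis by simp
      qed
      show "integrable lborel (\<lambda>s. \<integral>y. norm ((\<lambda>(s, y). h s y) (s, y)) \<partial>lborel)"
        unfolding n using sexp_int unfolding set_integrable_def by (intro integrable_mult_left)
      show "AE s in lborel. integrable lborel (\<lambda>y. (\<lambda>(s, y). h s y) (s, y))"
      proof (intro AE_I2)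
        fix s :: real
        have I: "integrable lborel (\<lambda>y. indicator {0<..} y *\<^sub>R (complex_of_real (\<psi> (y / m)) * exp (\<i> * complex_of_real (y * s))))"
          by (rule Bochner_Integration.integrable_bound[OF A]) (auto simp: norm_mult indicator_def)
        show "integrable lborel (\<lambda>y. (\<lambda>(s, y). h s y) (s, y))"
          unfolding h_def case_prod_conv by (rule integrable_mult_right) (rule I)
      qed
    qed
  qed
  also have "\<dots> = (\<integral>y. indicator {0<..} y *\<^sub>R (complex_of_real (\<psi> (y / m)) * (1 / (1 - \<i> * of_real y)^2)) \<partial>lborel)"
  proof (rule Bochner_Integration.integral_cong[OF refl])
    fix y :: real
    have hs: "(\<lambda>s. h s y) = (\<lambda>s. (indicator {0<..} y *\<^sub>R complex_of_real (\<psi> (y / m))) *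
        (indicator {0<..} s *\<^sub>R (complex_of_real (s * exp (-s)) * exp (\<i> * complex_of_real (y * s)))))"
      by (auto simp: h_def indicator_def fun_eq_iff)
    have "(\<integral>s. h s y \<partial>lborel) = (indicator {0<..} y *\<^sub>R complex_of_real (\<psi> (y / m))) *
        (LINT s:{0<..}|lborel. complex_of_real (s * exp (-s)) * exp (\<i> * complex_of_real (y * s)))"
      unfolding hs set_lebesgue_integral_def by (rule integral_mult_right_zero)
    also have "\<dots> = indicator {0<..} y *\<^sub>R (complex_of_real (\<psi> (y / m)) * (1 / (1 - \<i> * of_real y)^2))"
      unfolding kernel_int(2) by (simp add: scaleR_conv_of_real)
    finally show "(\<integral>s. h s y \<partial>lborel) = indicator {0<..} y *\<^sub>R (complex_of_real (\<psi> (y / m)) * (1 / (1 - \<i> * of_real y)^2))" .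
  qed
  finally show ?thesis unfolding set_lebesgue_integral_def .
qed

lemma yside_lim:
  fixes \<psi> :: "real \<Rightarrow> real" and M :: real
  assumes \<psi>c: "continuous_on UNIV \<psi>" and bnd: "\<And>x. x \<ge> 0 \<Longrightarrow> \<bar>\<psi> x\<bar> \<le> M"
  shows "(\<lambda>n. LINT y:{0<..}|lborel. complex_of_real (\<psi> (y / real (Suc n))) * (1 / (1 - \<i> * of_real y)^2))
      \<longlonglongrightarrow> \<i> * of_real (\<psi> 0)"
proof -
  have \<psi>m [measurable]: "\<psi> \<in> borel_measurable borel" by (rule borel_measurable_continuous_onI[OF \<psi>c])
  have "(\<lambda>n. \<integral>y. indicator {0<..} y *\<^sub>R (complex_of_real (\<psi> (y / real (Suc n))) * (1 / (1 - \<i> * of_real y)^2)) \<partial>lborel)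
      \<longlonglongrightarrow> (\<integral>y. indicator {0<..} y *\<^sub>R (complex_of_real (\<psi> 0) * (1 / (1 - \<i> * of_real y)^2)) \<partial>lborel)"
  proof (rule integral_dominated_convergence[where w="\<lambda>y. indicator {0<..} y * (M * inverse (1 + y^2))"])
    show "(\<lambda>y. indicator {0<..} y *\<^sub>R (complex_of_real (\<psi> 0) * (1 / (1 - \<i> * of_real y)^2))) \<in> borel_measurable lborel"
      by measurable
    show "(\<lambda>y. indicator {0<..} y *\<^sub>R (complex_of_real (\<psi> (y / real (Suc n))) * (1 / (1 - \<i> * of_real y)^2))) \<in> borel_measurable lborel" for n
      by measurable
    have "set_integrable lborel {0<..} (\<lambda>x::real. inverse (1 + x^2))"
      using set_integrable_subset[OF integrable_inverse_1_plus_square] by simp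
    then show "integrable lborel (\<lambda>y. indicator {0<..} y * (M * inverse (1 + y^2)))"
      unfolding set_integrable_def by (auto intro: integrable_mult_right simp: mult.left_commute[of _ M])
    show "AE y in lborel. (\<lambda>n. indicator {0<..} y *\<^sub>R (complex_of_real (\<psi> (y / real (Suc n))) * (1 / (1 - \<i> * of_real y)^2)))
       \<longlonglongrightarrow> indicator {0<..} y *\<^sub>R (complex_of_real (\<psi> 0) * (1 / (1 - \<i> * of_real y)^2))"
    proof (intro AE_I2)
      fix y :: real
      have "(\<lambda>n. y / real (Suc n)) \<longlonglongrightarrow> 0" by real_asymp
      moreover have "isCont \<psi> 0" using \<psi>c by (simp add: continuous_on_eq_continuous_at)
      ultimately have "(\<lambda>n. \<psi> (y / real (Suc n))) \<longlonglongrightarrow> \<psi> 0"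
        using isCont_tendsto_compose by blast
      then show "(\<lambda>n. indicator {0<..} y *\<^sub>R (complex_of_real (\<psi> (y / real (Suc n))) * (1 / (1 - \<i> * of_real y)^2)))
       \<longlonglongrightarrow> indicator {0<..} y *\<^sub>R (complex_of_real (\<psi> 0) * (1 / (1 - \<i> * of_real y)^2))"
        by (intro tendsto_intros)
    qed
    show "AE y in lborel. norm (indicator {0<..} y *\<^sub>R (complex_of_real (\<psi> (y / real (Suc n))) * (1 / (1 - \<i> * of_real y)^2)))
        \<le> indicator {0<..} y * (M * inverse (1 + y^2))" for n
    proof (intro AE_I2)
      fix y :: real
      show "norm (indicator {0<..} y *\<^sub>R (complex_of_real (\<psi> (y / real (Suc n))) * (1 / (1 - \<i> * of_real y)^2)))
        \<le> indicator {0<..} y * (M * inverse (1 + y^2))"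
      proof (cases "y > 0")
        case True
        have "\<bar>\<psi> (y / real (Suc n))\<bar> \<le> M" using True by (intro bnd) simp
        moreover have "norm (complex_of_real (\<psi> (y / real (Suc n))) * (1 / (1 - \<i> * of_real y)^2))
           = \<bar>\<psi> (y / real (Suc n))\<bar> * inverse (1 + y^2)"
          by (simp only: norm_mult norm_k norm_of_real)
        moreover have "inverse (1 + y^2) \<ge> 0" by simp
        ultimately show ?thesis using True
          by (simp add: mult_right_mono)
      qed simp
    qed
  qed
  also have "(\<integral>y. indicator {0<..} y *\<^sub>R (complex_of_real (\<psi> 0) * (1 / (1 - \<i> * of_real y)^2)) \<partial>lborel)
      = complex_of_real (\<psi> 0) * (LINT y:{0<..}|lborel. 1 / (1 - \<i> * of_real y)^2)"
    unfolding set_lebesgue_integral_def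
    by (subst integral_mult_right_zero[symmetric]) (simp add: scaleR_conv_of_real ac_simps)
  also have "\<dots> = \<i> * of_real (\<psi> 0)" unfolding k_int(2) by simp
  finally show ?thesis unfolding set_lebesgue_integral_def .
qed

lemma main_D:
  fixes \<psi> :: "real \<Rightarrow> real" and c :: complex and M :: real
  assumes \<psi>c: "continuous_on UNIV \<psi>" and int: "set_integrable lborel {0<..} \<psi>"
    and bnd: "\<And>x. x \<ge> 0 \<Longrightarrow> \<bar>\<psi> x\<bar> \<le> M"
    and H: "((\<lambda>t. of_real t * FF \<psi> t) \<longlongrightarrow> c) at_top"
  shows "c = \<i> * of_real (\<psi> 0)"
proof -
  have \<psi>m: "\<psi> \<in> borel_measurable borel" by (rule borel_measurable_continuous_onI[OF \<psi>c])
  have 1: "(\<lambda>n. LINT s:{0<..}|lborel. exp (-s) *\<^sub>R (of_real (s * real (Suc n)) * FF \<psi> (s * real (Suc n)))) \<longlonglongrightarrow> c"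
    by (rule tside[OF \<psi>m int H])
  have eq: "(LINT s:{0<..}|lborel. exp (-s) *\<^sub>R (of_real (s * real (Suc n)) * FF \<psi> (s * real (Suc n))))
     = (LINT y:{0<..}|lborel. complex_of_real (\<psi> (y / real (Suc n))) * (1 / (1 - \<i> * of_real y)^2))" for n
    by (rule yside_eq[OF \<psi>m int]) simp
  have 2: "(\<lambda>n. LINT y:{0<..}|lborel. complex_of_real (\<psi> (y / real (Suc n))) * (1 / (1 - \<i> * of_real y)^2)) \<longlonglongrightarrow> c"
    using 1 unfolding eq .
  show ?thesis using LIMSEQ_unique[OF 2 yside_lim[OF \<psi>c bnd]] .
qed


theorem theorem1:
  fixes \<phi> :: "real \<Rightarrow> real"
  assumes "continuous_on {0..} \<phi>"
    and "set_integrable lborel {0<..} \<phi>"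
    and "has_bounded_variation_on \<phi> {0..}"
    and "(\<phi> \<longlongrightarrow> 0) at_top"
  shows "(FS_transform \<phi> \<longlongrightarrow> 0) at_infinity \<longleftrightarrow>
         (\<exists>L. (FS_transform \<phi> \<longlongrightarrow> L) at_infinity)"
proof
  assume "(FS_transform \<phi> \<longlongrightarrow> 0) at_infinity"
  then show "\<exists>L. (FS_transform \<phi> \<longlongrightarrow> L) at_infinity" by blast
next
  assume "\<exists>L. (FS_transform \<phi> \<longlongrightarrow> L) at_infinity"
  then obtain L where L: "(FS_transform \<phi> \<longlongrightarrow> L) at_infinity" by blast
  note \<phi>c = assms(1) and int = assms(2) and lim = assms(4)
  define \<psi> where "\<psi> x = \<phi> (max 0 x)" for x
  have \<psi>c: "continuous_on UNIV \<psi>" unfolding \<psi>_def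
    by (rule continuous_on_compose2[OF \<phi>c]) (auto intro!: continuous_intros)
  have \<psi>eq: "\<psi> x = \<phi> x" if "x \<ge> 0" for x using that by (simp add: \<psi>_def)
  have \<psi>int: "set_integrable lborel {0<..} \<psi>"
    using int by (subst set_integrable_cong[OF refl refl, of _ _ \<phi>]) (auto simp: \<psi>eq)
  obtain T where T: "\<And>x. x \<ge> T \<Longrightarrow> \<bar>\<phi> x\<bar> \<le> 1"
    using lim[unfolded tendsto_iff, rule_format, of 1] unfolding eventually_at_top_linorder
    by (auto simp: dist_real_def) (meson less_imp_le)
  have "bounded (\<phi> ` {0..max T 0})"
    by (rule compact_imp_bounded[OF compact_continuous_image])
       (auto intro: continuous_on_subset[OF \<phi>c])
  then obtain B where B: "\<And>x. x \<in> {0..max T 0} \<Longrightarrow> \<bar>\<phi> x\<bar> \<le> B"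
    unfolding bounded_iff by (metis image_eqI real_norm_def)
  have bnd: "\<bar>\<psi> x\<bar> \<le> max 1 B" if "x \<ge> 0" for x
  proof (cases "x \<ge> T")
    case True then show ?thesis using T[of x] \<psi>eq[OF that] by simp
  next
    case False then show ?thesis using B[of x] \<psi>eq[OF that] that by simp
  qed
  have FS: "FS_transform \<phi> t = - of_real (\<phi> 0) - \<i> * of_real t * FF \<psi> t" for t
  proof -
    have "(LINT s:{0<..}|lborel. of_real (\<phi> s) * exp (\<i> * complex_of_real (s * t))) = FF \<psi> t"
      unfolding FF_def by (rule set_lebesgue_integral_cong) (auto simp: \<psi>eq)
    then show ?thesis using FS_formula[OF \<phi>c int lim, of t] by simp
  qed
  have Lt: "(FS_transform \<phi> \<longlongrightarrow> L) at_top"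
    using L by (rule filterlim_mono[OF _ order_refl at_top_le_at_infinity])
  have eqH: "of_real t * FF \<psi> t = \<i> * (FS_transform \<phi> t + of_real (\<phi> 0))" for t
    unfolding FS by (simp add: algebra_simps)
  have H: "((\<lambda>t. of_real t * FF \<psi> t) \<longlongrightarrow> \<i> * (L + of_real (\<phi> 0))) at_top"
    unfolding eqH by (intro tendsto_intros Lt)
  have "\<i> * (L + of_real (\<phi> 0)) = \<i> * of_real (\<psi> 0)"
    by (rule main_D[OF \<psi>c \<psi>int bnd H])
  then have "L = 0" by (simp add: \<psi>eq)
  then show "(FS_transform \<phi> \<longlongrightarrow> 0) at_infinity" using L by simp
qed

end
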